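(* Let $T$ be a pruned group tree and $X$ a Polish $G_T$-space. Then there is a Borel injective map $f:X\to\mathbb{R}^T$ that is equivariant: $g\cdot f(x)=f(g\cdot x)$ for all $g\in G_T$ and $x\in X$.
   Context: Fix countable groups $(\Delta_i)_{i\in\omega}$ and let $\Delta^n=\prod_{i<n}\Delta_i$ ($\Delta^0$ trivial). A group tree is a set $T\subseteq\bigcup_n\Delta^n$ closed under initial segments such that each $T^n:=T\cap\Delta^n$ is a subgroup of $\Delta^n$; it is pruned if every element of $T$ has a proper extension in $T$. $\ell(a)$ is the length of $a\in T$, and products/inverses of tuples of equal length $n$ are taken in $T^n$. $G_T$ is the closed subgroup of $\prod_i\Delta_i$ (product of discrete groups) consisting of those $g$ with $g\upharpoonright n\in T$ for all $n$. $\mathbb{R}^T$ carries the product topology ($T$ countable), and $G_T$ acts on it by $(g\cdot\mathbf{x})(b)=\mathbf{x}((g\upharpoonright\ell(b))^{-1}\cdot b)$. A Polish $G_T$-space is a Polish space with a continuous $G_T$-action. *)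

theory Defs
  imports "HOL-Analysis.Analysis" "HOL-Algebra.Group"
begin

text \<open>The groups Delta_i are given as a family Delta :: nat => 'a monoid of HOL-Algebra
  groups sharing one element type.  Tuples of length n are lists of length n.\<close>

definition Delta_pow :: "(nat \<Rightarrow> 'a monoid) \<Rightarrow> nat \<Rightarrow> 'a list monoid" where
  "Delta_pow Delta n =
     \<lparr> carrier = {xs. length xs = n \<and> (\<forall>i<n. xs ! i \<in> carrier (Delta i))},
       mult = (\<lambda>a b. map (\<lambda>i. a ! i \<otimes>\<^bsub>Delta i\<^esub> b ! i) [0..<n]),
       one = map (\<lambda>i. \<one>\<^bsub>Delta i\<^esub>) [0..<n] \<rparr>"

definition group_tree :: "(nat \<Rightarrow> 'a monoid) \<Rightarrow> 'a list set \<Rightarrow> bool" where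
  "group_tree Delta T \<longleftrightarrow>
     T \<subseteq> (\<Union>n. carrier (Delta_pow Delta n)) \<and>
     (\<forall>a\<in>T. \<forall>k. take k a \<in> T) \<and>
     (\<forall>n. subgroup {a \<in> T. length a = n} (Delta_pow Delta n))"

definition pruned :: "'a list set \<Rightarrow> bool" where
  "pruned T \<longleftrightarrow> (\<forall>a\<in>T. \<exists>b\<in>T. length a < length b \<and> take (length a) b = a)"

definition GT :: "(nat \<Rightarrow> 'a monoid) \<Rightarrow> 'a list set \<Rightarrow> (nat \<Rightarrow> 'a) set" where
  "GT Delta T = {g. (\<forall>i. g i \<in> carrier (Delta i)) \<and> (\<forall>n. map g [0..<n] \<in> T)}"

definition GT_group :: "(nat \<Rightarrow> 'a monoid) \<Rightarrow> 'a list set \<Rightarrow> (nat \<Rightarrow> 'a) monoid" where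
  "GT_group Delta T =
     \<lparr> carrier = GT Delta T,
       mult = (\<lambda>g h i. g i \<otimes>\<^bsub>Delta i\<^esub> h i),
       one = (\<lambda>i. \<one>\<^bsub>Delta i\<^esub>) \<rparr>"

definition GT_top :: "(nat \<Rightarrow> 'a monoid) \<Rightarrow> 'a list set \<Rightarrow> (nat \<Rightarrow> 'a) topology" where
  "GT_top Delta T = subtopology
     (product_topology (\<lambda>i. discrete_topology (carrier (Delta i))) UNIV) (GT Delta T)"

text \<open>R^T: real-valued functions on T (product topology); values outside T are
  the default value, as in the library's product topology.\<close>

definition RT_top :: "'a list set \<Rightarrow> ('a list \<Rightarrow> real) topology" where
  "RT_top T = product_topology (\<lambda>_. euclideanreal) T"

definition restr :: "(nat \<Rightarrow> 'a) \<Rightarrow> nat \<Rightarrow> 'a list" where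
  "restr g n = map g [0..<n]"

definition RT_action ::
  "(nat \<Rightarrow> 'a monoid) \<Rightarrow> 'a list set \<Rightarrow> (nat \<Rightarrow> 'a) \<Rightarrow> ('a list \<Rightarrow> real) \<Rightarrow> ('a list \<Rightarrow> real)" where
  "RT_action Delta T g x =
     (\<lambda>b. if b \<in> T then
             x (inv\<^bsub>Delta_pow Delta (length b)\<^esub> (restr g (length b)) \<otimes>\<^bsub>Delta_pow Delta (length b)\<^esub> b)
           else undefined)"

definition polish_space_top :: "'b topology \<Rightarrow> bool" where
  "polish_space_top X \<longleftrightarrow> completely_metrizable_space X \<and> separable_space X"

definition polish_G_space ::
  "'g monoid \<Rightarrow> 'g topology \<Rightarrow> 'b topology \<Rightarrow> ('g \<Rightarrow> 'b \<Rightarrow> 'b) \<Rightarrow> bool" where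
  "polish_G_space G GTop X act \<longleftrightarrow>
     polish_space_top X \<and>
     (\<forall>g\<in>carrier G. \<forall>x\<in>topspace X. act g x \<in> topspace X) \<and>
     (\<forall>x\<in>topspace X. act \<one>\<^bsub>G\<^esub> x = x) \<and>
     (\<forall>g\<in>carrier G. \<forall>h\<in>carrier G. \<forall>x\<in>topspace X. act (g \<otimes>\<^bsub>G\<^esub> h) x = act g (act h x)) \<and>
     continuous_map (prod_topology GTop X) X (\<lambda>(g, x). act g x)"

definition borel_map :: "'b topology \<Rightarrow> 'c topology \<Rightarrow> ('b \<Rightarrow> 'c) \<Rightarrow> bool" where
  "borel_map X Y f \<longleftrightarrow>
     f \<in> topspace X \<rightarrow> topspace Y \<and>
     (\<forall>U. openin Y U \<longrightarrow>
        {x \<in> topspace X. f x \<in> U} \<in> sigma_sets (topspace X) {V. openin X V})"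

end

theory Submission imports Defs begin


definition ginv :: "(nat \<Rightarrow> 'a monoid) \<Rightarrow> (nat \<Rightarrow> 'a) \<Rightarrow> (nat \<Rightarrow> 'a)" where
  "ginv Delta g = (\<lambda>i. inv\<^bsub>Delta i\<^esub> (g i))"

definition gmul :: "(nat \<Rightarrow> 'a monoid) \<Rightarrow> (nat \<Rightarrow> 'a) \<Rightarrow> (nat \<Rightarrow> 'a) \<Rightarrow> (nat \<Rightarrow> 'a)" where
  "gmul Delta g h = (\<lambda>i. g i \<otimes>\<^bsub>Delta i\<^esub> h i)"

lemma Delta_pow_simps:
  "carrier (Delta_pow Delta n) = {xs. length xs = n \<and> (\<forall>i<n. xs ! i \<in> carrier (Delta i))}"
  "a \<otimes>\<^bsub>Delta_pow Delta n\<^esub> b = map (\<lambda>i. a ! i \<otimes>\<^bsub>Delta i\<^esub> b ! i) [0..<n]"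
  "\<one>\<^bsub>Delta_pow Delta n\<^esub> = map (\<lambda>i. \<one>\<^bsub>Delta i\<^esub>) [0..<n]"
  by (simp_all add: Delta_pow_def)

lemma inv_Delta_pow:
  assumes grp: "\<And>i. group (Delta i)" and a: "a \<in> carrier (Delta_pow Delta n)"
  shows "inv\<^bsub>Delta_pow Delta n\<^esub> a = map (\<lambda>i. inv\<^bsub>Delta i\<^esub> (a ! i)) [0..<n]"
proof -
  have al: "length a = n" and ac: "\<And>i. i < n \<Longrightarrow> a ! i \<in> carrier (Delta i)"
    using a by (auto simp: Delta_pow_simps)
  define b where "b = map (\<lambda>i. inv\<^bsub>Delta i\<^esub> (a ! i)) [0..<n]"
  have h1: "b \<in> carrier (Delta_pow Delta n) \<and> a \<otimes>\<^bsub>Delta_pow Delta n\<^esub> b = \<one>\<^bsub>Delta_pow Delta n\<^esub>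
        \<and> b \<otimes>\<^bsub>Delta_pow Delta n\<^esub> a = \<one>\<^bsub>Delta_pow Delta n\<^esub>"
    using ac grp al unfolding b_def by (auto simp: Delta_pow_simps group.r_inv group.l_inv group.inv_closed)
  have h2: "y = b" if y: "y \<in> carrier (Delta_pow Delta n) \<and> a \<otimes>\<^bsub>Delta_pow Delta n\<^esub> y = \<one>\<^bsub>Delta_pow Delta n\<^esub>
        \<and> y \<otimes>\<^bsub>Delta_pow Delta n\<^esub> a = \<one>\<^bsub>Delta_pow Delta n\<^esub>" for y
  proof -
    from y have yl: "length y = n" and yc: "\<And>i. i < n \<Longrightarrow> y ! i \<in> carrier (Delta i)"
      by (auto simp: Delta_pow_simps)
    have "\<And>i. i < n \<Longrightarrow> y ! i \<otimes>\<^bsub>Delta i\<^esub> a ! i = \<one>\<^bsub>Delta i\<^esub>"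
    proof -
      fix i assume "i < n"
      have "(y \<otimes>\<^bsub>Delta_pow Delta n\<^esub> a) ! i = \<one>\<^bsub>Delta_pow Delta n\<^esub> ! i" using y by simp
      then show "y ! i \<otimes>\<^bsub>Delta i\<^esub> a ! i = \<one>\<^bsub>Delta i\<^esub>" using \<open>i < n\<close> by (simp add: Delta_pow_simps)
    qed
    then have "\<And>i. i < n \<Longrightarrow> y ! i = inv\<^bsub>Delta i\<^esub> (a ! i)"
      using grp ac yc by (metis group.inv_equality)
    then show "y = b" using yl unfolding b_def by (intro nth_equalityI) auto
  qed
  have "inv\<^bsub>Delta_pow Delta n\<^esub> a = b"
    unfolding m_inv_def using h1 h2 by (rule the_equality)
  then show ?thesis unfolding b_def .
qed

context
  fixes Delta :: "nat \<Rightarrow> 'a monoid" and T :: "'a list set"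
  assumes grp: "\<And>i. group (Delta i)" and gt: "group_tree Delta T"
begin

lemma T_sub: "subgroup {a \<in> T. length a = n} (Delta_pow Delta n)"
  using gt unfolding group_tree_def by blast

lemma T_carrier: "b \<in> T \<Longrightarrow> i < length b \<Longrightarrow> b ! i \<in> carrier (Delta i)"
  using gt unfolding group_tree_def Delta_pow_def by auto

lemma T_carrier_pow: "b \<in> T \<Longrightarrow> b \<in> carrier (Delta_pow Delta (length b))"
  using T_carrier by (auto simp: Delta_pow_simps)

lemma restr_GT: "g \<in> GT Delta T \<Longrightarrow> restr g n \<in> T"
  by (simp add: GT_def restr_def)

lemma GT_carrier: "g \<in> GT Delta T \<Longrightarrow> g i \<in> carrier (Delta i)"
  by (simp add: GT_def)

lemma one_GT: "(\<lambda>i. \<one>\<^bsub>Delta i\<^esub>) \<in> GT Delta T"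
proof -
  have "\<one>\<^bsub>Delta_pow Delta n\<^esub> \<in> {a \<in> T. length a = n}" for n
    using subgroup.one_closed[OF T_sub] by blast
  then show ?thesis using grp by (auto simp: GT_def Delta_pow_simps group.is_monoid)
qed

lemma gmul_GT: "g \<in> GT Delta T \<Longrightarrow> h \<in> GT Delta T \<Longrightarrow> gmul Delta g h \<in> GT Delta T"
proof -
  assume g: "g \<in> GT Delta T" and h: "h \<in> GT Delta T"
  have "map (gmul Delta g h) [0..<n] = restr g n \<otimes>\<^bsub>Delta_pow Delta n\<^esub> restr h n" for n
    by (simp add: Delta_pow_simps restr_def gmul_def)
  moreover have "restr g n \<otimes>\<^bsub>Delta_pow Delta n\<^esub> restr h n \<in> {a \<in> T. length a = n}" for n
  proof -
    have "restr g n \<in> {a \<in> T. length a = n}" "restr h n \<in> {a \<in> T. length a = n}"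
      using restr_GT[OF g] restr_GT[OF h] by (auto simp: restr_def)
    then show ?thesis using subgroup.m_closed[OF T_sub] by blast
  qed
  moreover have "gmul Delta g h i \<in> carrier (Delta i)" for i
    using GT_carrier[OF g] GT_carrier[OF h] grp unfolding gmul_def by (metis group.is_monoid monoid.m_closed)
  ultimately show ?thesis unfolding GT_def by auto
qed

lemma ginv_GT: "g \<in> GT Delta T \<Longrightarrow> ginv Delta g \<in> GT Delta T"
proof -
  assume g: "g \<in> GT Delta T"
  have rc: "restr g n \<in> carrier (Delta_pow Delta n)" for n
    using GT_carrier[OF g] by (auto simp: Delta_pow_simps restr_def)
  have "map (ginv Delta g) [0..<n] = inv\<^bsub>Delta_pow Delta n\<^esub> restr g n" for n
    using inv_Delta_pow[OF grp rc] by (simp add: restr_def ginv_def)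
  moreover have "inv\<^bsub>Delta_pow Delta n\<^esub> restr g n \<in> {a \<in> T. length a = n}" for n
  proof -
    have "restr g n \<in> {a \<in> T. length a = n}"
      using restr_GT[OF g] by (auto simp: restr_def)
    then show ?thesis using subgroup.m_inv_closed[OF T_sub] by blast
  qed
  moreover have "ginv Delta g i \<in> carrier (Delta i)" for i
    using GT_carrier[OF g] grp unfolding ginv_def by (metis group.inv_closed)
  ultimately show ?thesis unfolding GT_def by auto
qed


lemma ginv_gmul1:
  assumes "\<And>i. a i \<in> carrier (Delta i)" "\<And>i. g i \<in> carrier (Delta i)"
  shows "ginv Delta (gmul Delta (ginv Delta a) g) = gmul Delta (ginv Delta g) a"
  unfolding ginv_def gmul_def using assms grp by (auto simp: group.inv_mult_group group.inv_inv group.inv_closed)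

lemma ginv_gmul2:
  assumes "\<And>i. a i \<in> carrier (Delta i)" "\<And>i. g i \<in> carrier (Delta i)"
  shows "gmul Delta (ginv Delta (gmul Delta a g)) a = ginv Delta g"
proof
  fix i
  interpret G: group "Delta i" by (rule grp)
  show "gmul Delta (ginv Delta (gmul Delta a g)) a i = ginv Delta g i"
    unfolding ginv_def gmul_def using assms(1)[of i] assms(2)[of i]
    by (simp add: G.inv_mult_group G.m_assoc)
qed

lemma cancel_left:
  assumes "x \<in> carrier (Delta i)" "y \<in> carrier (Delta i)"
  shows "x \<otimes>\<^bsub>Delta i\<^esub> (inv\<^bsub>Delta i\<^esub> x \<otimes>\<^bsub>Delta i\<^esub> y) = y"
proof -
  interpret G: group "Delta i" by (rule grp)
  show ?thesis using assms by (simp add: G.m_assoc[symmetric])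
qed

end


lemma (in Metric_space) sep_second_countable:
  assumes "separable_space mtopology"
  shows "second_countable mtopology"
proof -
  obtain C where C: "countable C" "C \<subseteq> M" "mtopology closure_of C = M"
    using assms unfolding separable_space_def by auto
  define B where "B = (\<lambda>(c,n). mball c (1 / Suc n)) ` (C \<times> UNIV)"
  have "countable B" unfolding B_def using C(1) by auto
  moreover have "\<forall>V\<in>B. openin mtopology V" unfolding B_def by auto
  moreover have "\<exists>V\<in>B. x \<in> V \<and> V \<subseteq> U" if U: "openin mtopology U" "x \<in> U" for U x
  proof -
    obtain r where r: "r > 0" "mball x r \<subseteq> U" using U openin_mtopology by metis
    obtain n where n: "1 / Suc n < r / 2"
      by (metis \<open>r > 0\<close> half_gt_zero_iff nat_approx_posE)
    have xM: "x \<in> M" using U openin_mtopology by blast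
    have "C \<inter> mball x (1 / Suc n) \<noteq> {}"
    proof -
      have "x \<in> mball x (1 / Suc n)" using xM by simp
      moreover have "mtopology closure_of C = topspace mtopology" using C(3) by simp
      ultimately show ?thesis unfolding dense_intersects_open by blast
    qed
    then obtain c where c: "c \<in> C" "d x c < 1 / Suc n" using C(2) by auto
    have cM: "c \<in> M" using c C(2) by auto
    have "x \<in> mball c (1 / Suc n)" using c xM cM commute by auto
    moreover have "mball c (1 / Suc n) \<subseteq> U"
    proof
      fix y assume "y \<in> mball c (1 / Suc n)"
      then have "y \<in> M" "d c y < 1 / Suc n" by auto
      then have "d x y < r" using triangle[OF xM cM \<open>y\<in>M\<close>] c n by linarith
      then show "y \<in> U" using r xM \<open>y\<in>M\<close> by auto
    qed
    moreover have "mball c (1 / Suc n) \<in> B" unfolding B_def using c by force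
    ultimately show ?thesis by blast
  qed
  ultimately show ?thesis unfolding second_countable_def by blast
qed

lemma polish_second_countable:
  assumes "polish_space_top X" shows "second_countable X" "Hausdorff_space X"
proof -
  have m: "metrizable_space X" using assms completely_metrizable_imp_metrizable_space
    unfolding polish_space_top_def by blast
  then obtain M d where "Metric_space M d" "X = Metric_space.mtopology M d"
    unfolding metrizable_space_def by blast
  then show "second_countable X" using Metric_space.sep_second_countable assms
    unfolding polish_space_top_def by blast
  show "Hausdorff_space X" using m metrizable_imp_Hausdorff_space by blast
qed


theorem mainTheorem12:
  fixes Delta :: "nat \<Rightarrow> 'a monoid" and T :: "'a list set"
    and X :: "'b topology" and act :: "(nat \<Rightarrow> 'a) \<Rightarrow> 'b \<Rightarrow> 'b"
  assumes "\<And>i. group (Delta i)"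
    and "\<And>i. countable (carrier (Delta i))"
    and "group_tree Delta T"
    and "pruned T"
    and "polish_G_space (GT_group Delta T) (GT_top Delta T) X act"
  shows "\<exists>f. borel_map X (RT_top T) f \<and> inj_on f (topspace X) \<and>
    (\<forall>g\<in>GT Delta T. \<forall>x\<in>topspace X. RT_action Delta T g (f x) = f (act g x))"
proof -
  note grp = assms(1) and gt = assms(3)
  have pol: "polish_space_top X"
    and actX: "\<And>g x. g \<in> GT Delta T \<Longrightarrow> x \<in> topspace X \<Longrightarrow> act g x \<in> topspace X"
    and act1: "\<And>x. x \<in> topspace X \<Longrightarrow> act (\<lambda>i. \<one>\<^bsub>Delta i\<^esub>) x = x"
    and actm: "\<And>g h x. g \<in> GT Delta T \<Longrightarrow> h \<in> GT Delta T \<Longrightarrow> x \<in> topspace X \<Longrightarrow>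
                 act (gmul Delta g h) x = act g (act h x)"
    and cont: "continuous_map (prod_topology (GT_top Delta T) X) X (\<lambda>(g,x). act g x)"
    using assms(5) unfolding polish_G_space_def by (auto simp: GT_group_def gmul_def)
  have topGT: "topspace (GT_top Delta T) = GT Delta T"
    unfolding GT_top_def by (auto simp: topspace_product_topology GT_def)
  have contg: "continuous_map X X (act h)" if h: "h \<in> GT Delta T" for h
  proof -
    have "continuous_map X (prod_topology (GT_top Delta T) X) (\<lambda>x. (h, x))"
      using h topGT by (intro continuous_map_pairedI) (auto simp: continuous_map_const)
    from continuous_map_compose[OF this cont] show ?thesis by (simp add: o_def)
  qed
  obtain B where B: "countable B" "\<forall>V\<in>B. openin X V"
      "\<forall>U x. openin X U \<and> x \<in> U \<longrightarrow> (\<exists>V\<in>B. x \<in> V \<and> V \<subseteq> U)"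
    using polish_second_countable(1)[OF pol] unfolding second_countable_def by blast
  have haus: "Hausdorff_space X" using polish_second_countable(2)[OF pol] .
  define B' where "B' = insert (topspace X) B"
  define Ub where "Ub k = from_nat_into B' k" for k
  have Ub_open: "openin X (Ub k)" for k
    unfolding Ub_def using from_nat_into[of B' k] B(2) unfolding B'_def by auto
  have Ub_surj: "\<exists>k. Ub k = V" if "V \<in> B" for V
    unfolding Ub_def using from_nat_into_surj[of B' V] B(1) that unfolding B'_def by auto
  define mm where "mm n = fst (prod_decode n)" for n
  define kk where "kk n = snd (prod_decode n)" for n
  have mm_le: "mm n \<le> n" for n
    unfolding mm_def by (metis le_prod_encode_1 prod_decode_inverse surjective_pairing)
  define A where "A b = {x \<in> topspace X. \<exists>g\<in>GT Delta T. (\<forall>i<mm (length b). g i = b ! i)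
      \<and> act (ginv Delta g) x \<in> Ub (kk (length b))}" for b
  define f where "f x = (\<lambda>b. if b \<in> T then (if x \<in> A b then 1 else 0 :: real) else undefined)" for x
  have A_open: "openin X (A b)" for b
  proof -
    have "A b = \<Union> ((\<lambda>g. {x \<in> topspace X. act (ginv Delta g) x \<in> Ub (kk (length b))})
               ` {g \<in> GT Delta T. \<forall>i<mm (length b). g i = b ! i})"
      unfolding A_def by auto
    moreover have "openin X {x \<in> topspace X. act (ginv Delta g) x \<in> Ub (kk (length b))}"
      if "g \<in> GT Delta T" for g
      using openin_continuous_map_preimage[OF contg[OF ginv_GT[OF grp gt that]] Ub_open] .
    ultimately show ?thesis by auto
  qed
  have A_sub: "A b \<subseteq> topspace X" for b unfolding A_def by auto
  define \<Sigma> where "\<Sigma> = sigma_sets (topspace X) {V. openin X V}"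
  interpret sa: sigma_algebra "topspace X" \<Sigma>
    unfolding \<Sigma>_def by (rule sigma_algebra_sigma_sets) (auto dest: openin_subset)
  have open_in: "V \<in> \<Sigma>" if "openin X V" for V
    unfolding \<Sigma>_def using that by (auto intro: sigma_sets.Basic)
  have Cb: "{x \<in> topspace X. f x b = c} \<in> \<Sigma>" if "b \<in> T" for b c
  proof -
    consider "c = 1" | "c = 0" | "c \<noteq> 0" "c \<noteq> 1" by blast
    then show ?thesis
    proof cases
      case 1
      then have "{x \<in> topspace X. f x b = c} = A b" using that A_sub by (auto simp: f_def)
      then show ?thesis using open_in A_open by simp
    next
      case 2
      then have "{x \<in> topspace X. f x b = c} = topspace X - A b" using that by (auto simp: f_def)
      then show ?thesis using open_in A_open sa.compl_sets by simp
    next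
      case 3
      then have "{x \<in> topspace X. f x b = c} = {}" using that by (auto simp: f_def)
      then show ?thesis by (metis sa.empty_sets)
    qed
  qed
  have cyl: "{x \<in> topspace X. \<forall>b\<in>F. f x b = \<sigma> b} \<in> \<Sigma>" if "finite F" "F \<subseteq> T" for F \<sigma>
  proof (cases "F = {}")
    case True then show ?thesis by simp
  next
    case False
    have "{x \<in> topspace X. \<forall>b\<in>F. f x b = \<sigma> b} = (\<Inter>b\<in>F. {x \<in> topspace X. f x b = \<sigma> b})"
      using False by auto
    moreover have "(\<Inter>b\<in>F. {x \<in> topspace X. f x b = \<sigma> b}) \<in> \<Sigma>"
      using that False Cb by (intro sa.finite_INT) auto
    ultimately show ?thesis by simp
  qed
  have cT: "countable T"
  proof -
    have "T \<subseteq> lists (\<Union>i. carrier (Delta i))"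
      using T_carrier[OF grp gt] by (auto simp: in_set_conv_nth) blast
    moreover have "countable (lists (\<Union>i. carrier (Delta i)))"
      using assms(2) by (intro countable_lists countable_UN) auto
    ultimately show ?thesis by (rule countable_subset)
  qed
  have fT: "f x \<in> topspace (RT_top T)" for x
    unfolding RT_top_def by (auto simp: topspace_product_topology f_def PiE_def extensional_def)
  have borel: "{x \<in> topspace X. f x \<in> U} \<in> \<Sigma>" if U: "openin (RT_top T) U" for U
  proof -
    define S where "S = (SIGMA F:{F. finite F \<and> F \<subseteq> T}. PiE F (\<lambda>_. {0::real, 1}))"
    define C where "C = (\<lambda>(F, \<sigma>). if {x \<in> topspace X. \<forall>b\<in>F. f x b = \<sigma> b} \<subseteq> {x \<in> topspace X. f x \<in> U}
        then {x \<in> topspace X. \<forall>b\<in>F. f x b = \<sigma> b} else {})"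
    have cS: "countable S" unfolding S_def
      by (intro countable_SIGMA countable_Collect_finite_subset cT countable_PiE) auto
    have CS: "C p \<in> \<Sigma>" if "p \<in> S" for p
      using that cyl unfolding S_def C_def by (auto split: prod.splits)
    have "{x \<in> topspace X. f x \<in> U} = \<Union> (C ` S)"
    proof
      show "\<Union> (C ` S) \<subseteq> {x \<in> topspace X. f x \<in> U}"
        unfolding C_def by (auto split: prod.splits if_splits)
    next
      show "{x \<in> topspace X. f x \<in> U} \<subseteq> \<Union> (C ` S)"
      proof
        fix x assume x: "x \<in> {x \<in> topspace X. f x \<in> U}"
        then obtain V where V: "finite {i \<in> T. V i \<noteq> topspace euclideanreal}"
          "f x \<in> PiE T V" "PiE T V \<subseteq> U"
          using U unfolding RT_top_def openin_product_topology_alt by blast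
        define F where "F = {i \<in> T. V i \<noteq> topspace euclideanreal}"
        define \<sigma> where "\<sigma> = restrict (f x) F"
        have pS: "(F, \<sigma>) \<in> S" unfolding S_def F_def \<sigma>_def using V(1)
          by (auto simp: f_def)
        have sub: "{y \<in> topspace X. \<forall>b\<in>F. f y b = \<sigma> b} \<subseteq> {x \<in> topspace X. f x \<in> U}"
        proof clarify
          fix y assume y: "y \<in> topspace X" "\<forall>b\<in>F. f y b = \<sigma> b"
          have "f y \<in> PiE T V"
          proof (rule PiE_I)
            fix b assume b: "b \<in> T"
            show "f y b \<in> V b"
            proof (cases "b \<in> F")
              case True then show ?thesis using y V(2) b by (auto simp: \<sigma>_def)
            next
              case False then show ?thesis using b by (auto simp: F_def)
            qed
          next
            fix b assume "b \<notin> T" then show "f y b = undefined" by (simp add: f_def)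
          qed
          then show "f y \<in> U" using V(3) by blast
        qed
        have "x \<in> C (F, \<sigma>)" unfolding C_def using sub x by (auto simp: \<sigma>_def)
        then show "x \<in> \<Union> (C ` S)" using pS by blast
      qed
    qed
    then show ?thesis using sa.countable_UN''[OF cS] CS by auto
  qed
  have bm: "borel_map X (RT_top T) f"
    unfolding borel_map_def using fT borel unfolding \<Sigma>_def by auto
  have one: "(\<lambda>i. \<one>\<^bsub>Delta i\<^esub>) \<in> GT Delta T" using one_GT[OF grp gt] .
  have inj: "inj_on f (topspace X)"
  proof (rule inj_onI, rule ccontr)
    fix x y assume x: "x \<in> topspace X" and y: "y \<in> topspace X" and fxy: "f x = f y" and ne: "x \<noteq> y"
    obtain U W where UW: "openin X U" "openin X W" "x \<in> U" "y \<in> W" "disjnt U W"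
      using haus x y ne unfolding Hausdorff_space_def by blast
    define S where "S = {z \<in> topspace (prod_topology (GT_top Delta T) X). (\<lambda>(g,x). act g x) z \<in> W}"
    have opn: "openin (prod_topology (GT_top Delta T) X) S"
      unfolding S_def using openin_continuous_map_preimage[OF cont UW(2)] .
    have mem: "((\<lambda>i. \<one>\<^bsub>Delta i\<^esub>), y) \<in> S"
      unfolding S_def using one topGT y act1[OF y] UW(4) by (simp add: topspace_prod_topology)
    obtain N Ob where NO: "openin (GT_top Delta T) N" "openin X Ob"
      "(\<lambda>i. \<one>\<^bsub>Delta i\<^esub>) \<in> N" "y \<in> Ob" "N \<times> Ob \<subseteq> S"
      using opn[unfolded openin_prod_topology_alt, rule_format, OF mem] by blast
    obtain P where P: "openin (product_topology (\<lambda>i. discrete_topology (carrier (Delta i))) UNIV) P"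
      "N = P \<inter> GT Delta T"
      using NO(1)[unfolded GT_top_def openin_subtopology] by blast
    have Pone: "(\<lambda>i. \<one>\<^bsub>Delta i\<^esub>) \<in> P" using NO(3) P(2) by blast
    obtain V where V: "finite {i \<in> UNIV. V i \<noteq> topspace (discrete_topology (carrier (Delta i)))}"
      "(\<lambda>i. \<one>\<^bsub>Delta i\<^esub>) \<in> PiE UNIV V" "PiE UNIV V \<subseteq> P"
      using P(1)[unfolded openin_product_topology_alt, rule_format, OF Pone] by blast
    obtain m where m0: "{i \<in> UNIV. V i \<noteq> topspace (discrete_topology (carrier (Delta i)))} \<subseteq> {..<m}"
      using finite_nat_bounded[OF V(1)] by blast
    have m: "i < m" if "V i \<noteq> carrier (Delta i)" for i using m0 that by auto
    have inN: "g \<in> N" if g: "g \<in> GT Delta T" "\<forall>i<m. g i = \<one>\<^bsub>Delta i\<^esub>" for g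
    proof -
      have "g \<in> PiE UNIV V"
      proof (rule PiE_I)
        fix i
        show "g i \<in> V i"
        proof (cases "V i = carrier (Delta i)")
          case True then show ?thesis using GT_carrier[OF grp gt g(1)] by simp
        next
          case False then have "i < m" using m by simp
          then have "g i = \<one>\<^bsub>Delta i\<^esub>" using g(2) by simp
          moreover have "\<one>\<^bsub>Delta i\<^esub> \<in> V i" using V(2) by (simp add: PiE_iff)
          ultimately show ?thesis by simp
        qed
      qed simp
      then show ?thesis using V(3) P(2) g(1) by blast
    qed
    obtain Vb where Vb: "Vb \<in> B" "x \<in> Vb" "Vb \<subseteq> U" using B(3) UW(1,3) by blast
    obtain k where k: "Ub k = Vb" using Ub_surj[OF Vb(1)] by blast
    define n where "n = prod_encode (m, k)"
    have mmn: "mm n = m" and kkn: "kk n = k" unfolding mm_def kk_def n_def by simp_all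
    define b where "b = restr (\<lambda>i. \<one>\<^bsub>Delta i\<^esub>) n"
    have bT: "b \<in> T" unfolding b_def using restr_GT[OF grp gt one] .
    have lb: "length b = n" unfolding b_def restr_def by simp
    have bi: "b ! i = \<one>\<^bsub>Delta i\<^esub>" if "i < m" for i
      using that mm_le[of n] mmn unfolding b_def restr_def by simp
    have ginv1: "ginv Delta (\<lambda>i. \<one>\<^bsub>Delta i\<^esub>) = (\<lambda>i. \<one>\<^bsub>Delta i\<^esub>)"
      unfolding ginv_def using grp by (simp add: group.is_monoid monoid.inv_one)
    have h1: "act (ginv Delta (\<lambda>i. \<one>\<^bsub>Delta i\<^esub>)) x \<in> Ub (kk (length b))"
      using act1[OF x] Vb(2) k lb kkn ginv1 by simp
    have h2: "\<forall>i<mm (length b). (\<lambda>i. \<one>\<^bsub>Delta i\<^esub>) i = b ! i"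
      using bi lb mmn by simp
    have "x \<in> A b" unfolding A_def
      by (intro CollectI conjI bexI[of _ "(\<lambda>i. \<one>\<^bsub>Delta i\<^esub>)"] x one h1 h2)
    moreover have "y \<notin> A b"
    proof
      assume "y \<in> A b"
      then obtain g where g0: "g \<in> GT Delta T" "\<forall>i<mm (length b). g i = b ! i"
        "act (ginv Delta g) y \<in> Ub (kk (length b))"
        unfolding A_def by blast
      have g: "g \<in> GT Delta T" "\<forall>i<m. g i = \<one>\<^bsub>Delta i\<^esub>" "act (ginv Delta g) y \<in> Ub k"
        using g0 bi lb mmn kkn by simp_all
      have g': "ginv Delta g \<in> GT Delta T" using ginv_GT[OF grp gt g(1)] .
      have "\<forall>i<m. ginv Delta g i = \<one>\<^bsub>Delta i\<^esub>"
        using g(2) grp unfolding ginv_def by (simp add: group.is_monoid monoid.inv_one)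
      then have "ginv Delta g \<in> N" using inN g' by blast
      then have "(ginv Delta g, y) \<in> S" using NO(4,5) by blast
      then have "act (ginv Delta g) y \<in> W" unfolding S_def by simp
      then show False using g(3) k Vb(3) UW(5) by (auto simp: disjnt_def)
    qed
    ultimately have "f x b \<noteq> f y b" using bT by (simp add: f_def)
    then show False using fxy by simp
  qed
  have equiv: "RT_action Delta T a (f x) = f (act a x)" if a: "a \<in> GT Delta T" and x: "x \<in> topspace X" for a x
  proof
    fix b
    show "RT_action Delta T a (f x) b = f (act a x) b"
    proof (cases "b \<in> T")
      case False then show ?thesis by (simp add: RT_action_def f_def)
    next
      case bT: True
      define n where "n = length b"
      define c where "c = inv\<^bsub>Delta_pow Delta n\<^esub> (restr a n) \<otimes>\<^bsub>Delta_pow Delta n\<^esub> b"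
      have ra: "restr a n \<in> {a \<in> T. length a = n}" using restr_GT[OF grp gt a] by (simp add: restr_def)
      have bn: "b \<in> {a \<in> T. length a = n}" using bT n_def by simp
      have cT: "c \<in> T" unfolding c_def
        using subgroup.m_closed[OF T_sub[OF grp gt] subgroup.m_inv_closed[OF T_sub[OF grp gt] ra] bn] by simp
      have rac: "restr a n \<in> carrier (Delta_pow Delta n)"
        using GT_carrier[OF grp gt a] by (auto simp: Delta_pow_simps restr_def)
      have cdef: "c = map (\<lambda>i. inv\<^bsub>Delta i\<^esub> (a i) \<otimes>\<^bsub>Delta i\<^esub> b ! i) [0..<n]"
        unfolding c_def using inv_Delta_pow[OF grp rac] by (simp add: Delta_pow_simps restr_def)
      have lc: "length c = n" using cdef by simp
      have ci: "c ! i = inv\<^bsub>Delta i\<^esub> (a i) \<otimes>\<^bsub>Delta i\<^esub> b ! i" if "i < n" for i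
        using cdef that by simp
      have bc: "b ! i \<in> carrier (Delta i)" if "i < n" for i using T_carrier[OF grp gt bT] that n_def by simp
      have ac: "\<And>i. a i \<in> carrier (Delta i)" using GT_carrier[OF grp gt a] .
      have mn: "mm n \<le> n" by (rule mm_le)
      have key: "x \<in> A c \<longleftrightarrow> act a x \<in> A b"
      proof
        assume "x \<in> A c"
        then obtain g where g: "g \<in> GT Delta T" "\<forall>i<mm n. g i = c ! i" "act (ginv Delta g) x \<in> Ub (kk n)"
          unfolding A_def lc by auto
        define h where "h = gmul Delta a g"
        have h: "h \<in> GT Delta T" unfolding h_def using gmul_GT[OF grp gt a g(1)] .
        have "\<forall>i<mm n. h i = b ! i"
          using g(2) ci mn bc ac cancel_left[OF grp gt] unfolding h_def gmul_def by simp
        moreover have "act (ginv Delta h) (act a x) = act (ginv Delta g) x"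
          using actm[OF ginv_GT[OF grp gt h] a x, symmetric] ginv_gmul2[OF grp gt ac GT_carrier[OF grp gt g(1)]]
          unfolding h_def by simp
        ultimately show "act a x \<in> A b"
          using h g(3) actX[OF a x] unfolding A_def n_def by auto
      next
        assume "act a x \<in> A b"
        then obtain g where g: "g \<in> GT Delta T" "\<forall>i<mm n. g i = b ! i" "act (ginv Delta g) (act a x) \<in> Ub (kk n)"
          unfolding A_def n_def by auto
        define h where "h = gmul Delta (ginv Delta a) g"
        have h: "h \<in> GT Delta T" unfolding h_def using gmul_GT[OF grp gt ginv_GT[OF grp gt a] g(1)] .
        have "\<forall>i<mm n. h i = c ! i"
          using g(2) ci mn unfolding h_def gmul_def ginv_def by simp
        moreover have "act (ginv Delta h) x = act (ginv Delta g) (act a x)"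
          using actm[OF ginv_GT[OF grp gt g(1)] a x] ginv_gmul1[OF grp gt ac GT_carrier[OF grp gt g(1)]]
          unfolding h_def by simp
        ultimately show "x \<in> A c"
          using h g(3) x lc unfolding A_def by auto
      qed
      show ?thesis using bT cT key unfolding RT_action_def f_def c_def n_def by simp
    qed
  qed
  show ?thesis using bm inj equiv by blast
qed
end
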